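(* Let $\kappa$ be a regular infinite cardinal and $\mu$ a singular cardinal with $\mathrm{cf}(\mu)=\kappa$. Then $\mathrm{add}(\mathcal M_\kappa({}^{\kappa}\mu,\kappa))=\mathrm{add}(\mathcal M_\kappa({}^{\mu}\mu,\mathrm{bd}))=\mathrm{add}(\mathcal M_\kappa({}^{\mu}\mu,\kappa))=\mathrm{add}(\mathcal M_\kappa({}^{\mu}2,\mu))=\mathrm{add}(\mathcal M_\kappa({}^{\mu}\mu,\mu))$ $=\mathrm{cov}(\mathcal M_\kappa({}^{\kappa}\mu,\kappa))=\mathrm{cov}(\mathcal M_\kappa({}^{\mu}\mu,\mathrm{bd}))=\mathrm{cov}(\mathcal M_\kappa({}^{\mu}\mu,\kappa))=\mathrm{cov}(\mathcal M_\kappa({}^{\mu}2,\mu))=\mathrm{cov}(\mathcal M_\kappa({}^{\mu}\mu,\mu))=\kappa^+$.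
   Context: For ordinals $\delta,\rho$, ${}^{\delta}\rho$ is the set of functions $\delta\to\rho$; for a partial function $s\colon\delta\rightharpoonup\rho$, $[s]=\{f\in{}^{\delta}\rho: s\subseteq f\}$. Topologies on ${}^{\delta}\rho$: ${<}\kappa$-box (base $[s]$, $|\mathrm{dom}(s)|<\kappa$), denoted $\kappa$; ${<}\mu$-box (base $[s]$, $|\mathrm{dom}(s)|<\mu$), denoted $\mu$; bounded (base $[s]$, $s\in{}^{\alpha}\rho$, $\alpha<\delta$), denoted $\mathrm{bd}$. A set is $\kappa$-meagre if it is a union of at most $\kappa$ nowhere dense sets; $\mathcal M_\kappa(X,\tau)$ is the ideal of $\kappa$-meagre subsets of $(X,\tau)$. For a proper ideal $\mathcal I$ on $X$: $\mathrm{add}(\mathcal I)$ is the least size of $A\subseteq\mathcal I$ with $\bigcup A\notin\mathcal I$; $\mathrm{cov}(\mathcal I)$ is the least size of $C\subseteq\mathcal I$ with $\bigcup C=X$. *)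

theory Defs
  imports "HOL-Analysis.Analysis"
begin

unbundle cardinal_syntax

definition cyl :: "('a \<rightharpoonup> 'b) \<Rightarrow> ('a \<Rightarrow> 'b) set" where
  "cyl s = {f. s \<subseteq>\<^sub>m (Some \<circ> f)}"

definition box_top :: "'c rel \<Rightarrow> ('a \<Rightarrow> 'b) topology" where
  "box_top r = topology_generated_by {cyl s | s. card_of (dom s) <o r}"

text \<open>The bounded topology on functions whose domain is the ordinal represented
  by the well-order r on UNIV :: 'a set: base [s] with dom s a proper initial segment.\<close>
definition bd_top :: "'a rel \<Rightarrow> ('a \<Rightarrow> 'b) topology" where
  "bd_top r = topology_generated_by {cyl s | s a. dom s = underS r a}"

definition nowhere_dense_in :: "'a topology \<Rightarrow> 'a set \<Rightarrow> bool" where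
  "nowhere_dense_in X A \<longleftrightarrow> A \<subseteq> topspace X \<and> X interior_of (X closure_of A) = {}"

definition meagre_ideal :: "'c rel \<Rightarrow> 'a topology \<Rightarrow> 'a set set" where
  "meagre_ideal k X = {A. \<exists>F. card_of F \<le>o k \<and> (\<forall>N\<in>F. nowhere_dense_in X N) \<and> A = \<Union>F}"

definition add_is :: "'a set set \<Rightarrow> 'c rel \<Rightarrow> bool" where
  "add_is I t \<longleftrightarrow> (\<exists>A. A \<subseteq> I \<and> \<Union>A \<notin> I \<and> card_of A =o t)
                   \<and> (\<forall>A. A \<subseteq> I \<and> \<Union>A \<notin> I \<longrightarrow> t \<le>o card_of A)"

definition cov_is :: "'a set set \<Rightarrow> 'a set \<Rightarrow> 'c rel \<Rightarrow> bool" where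
  "cov_is I X t \<longleftrightarrow> (\<exists>C. C \<subseteq> I \<and> \<Union>C = X \<and> card_of C =o t)
                   \<and> (\<forall>C. C \<subseteq> I \<and> \<Union>C = X \<longrightarrow> t \<le>o card_of C)"

definition cof_is :: "'a rel \<Rightarrow> 'c rel \<Rightarrow> bool" where
  "cof_is r k \<longleftrightarrow> (\<exists>K. K \<subseteq> Field r \<and> cofinal K r \<and> card_of K =o k)
                 \<and> (\<forall>K. K \<subseteq> Field r \<and> cofinal K r \<longrightarrow> k \<le>o card_of K)"

definition add_cov_is :: "'c rel \<Rightarrow> 'a topology \<Rightarrow> 'd rel \<Rightarrow> bool" where
  "add_cov_is k X t \<longleftrightarrow> add_is (meagre_ideal k X) t \<and> cov_is (meagre_ideal k X) (topspace X) t"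

end

theory Submission
  imports Defs
begin

lemma cyl_iff: "f \<in> cyl s \<longleftrightarrow> (\<forall>x y. s x = Some y \<longrightarrow> f x = y)"
  unfolding cyl_def map_le_def by (force simp: dom_def)

lemma cyl_mono: "s \<subseteq>\<^sub>m t \<Longrightarrow> cyl t \<subseteq> cyl s"
  unfolding cyl_def using map_le_trans by blast

lemma cyl_nonempty: "cyl s \<noteq> {}"
proof -
  have "(\<lambda>x. case s x of Some y \<Rightarrow> y | None \<Rightarrow> undefined) \<in> cyl s"
    by (auto simp: cyl_iff)
  thus ?thesis by blast
qed

locale cylsp =
  fixes S :: "('a \<rightharpoonup> 'b) set"
  assumes cov: "\<exists>s\<in>S. f \<in> cyl s"
  and join: "s\<in>S \<Longrightarrow> u\<in>S \<Longrightarrow> f \<in> cyl s \<Longrightarrow> f \<in> cyl u \<Longrightarrow> \<exists>t\<in>S. s \<subseteq>\<^sub>m t \<and> u \<subseteq>\<^sub>m t \<and> f \<in> cyl t"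
begin

abbreviation "XX \<equiv> topology_generated_by (cyl ` S)"

lemma topsp: "topspace XX = UNIV"
  using cov by auto

lemma open_cyl: "s \<in> S \<Longrightarrow> openin XX (cyl s)"
  by (simp add: topology_generated_by_Basis)

lemma gen_basis: "generate_topology_on (cyl ` S) U \<Longrightarrow> f \<in> U \<Longrightarrow> \<exists>s\<in>S. f \<in> cyl s \<and> cyl s \<subseteq> U"
proof (induction arbitrary: f rule: generate_topology_on.induct)
  case Empty
  then show ?case by simp
next
  case (Int a b)
  then obtain s u where s: "s\<in>S" "f \<in> cyl s" "cyl s \<subseteq> a" and u: "u\<in>S" "f \<in> cyl u" "cyl u \<subseteq> b"
    by blast
  then obtain t where "t\<in>S" "s \<subseteq>\<^sub>m t" "u \<subseteq>\<^sub>m t" "f \<in> cyl t" using join by blast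
  then show ?case using s u cyl_mono by blast
next
  case (UN K)
  then show ?case by blast
next
  case (Basis s)
  then show ?case by blast
qed

lemma open_basis: "openin XX U \<Longrightarrow> f \<in> U \<Longrightarrow> \<exists>s\<in>S. f \<in> cyl s \<and> cyl s \<subseteq> U"
  using gen_basis openin_topology_generated_by_iff by blast

lemma nd_iff: "nowhere_dense_in XX N \<longleftrightarrow> (\<forall>s\<in>S. \<exists>t\<in>S. s \<subseteq>\<^sub>m t \<and> cyl t \<inter> N = {})"
proof
  assume nd: "nowhere_dense_in XX N"
  show "\<forall>s\<in>S. \<exists>t\<in>S. s \<subseteq>\<^sub>m t \<and> cyl t \<inter> N = {}"
  proof
    fix s assume s: "s \<in> S"
    have "\<not> cyl s \<subseteq> XX closure_of N"
    proof
      assume "cyl s \<subseteq> XX closure_of N"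
      then have "cyl s \<subseteq> XX interior_of (XX closure_of N)"
        by (rule interior_of_maximal[OF _ open_cyl[OF s]])
      then show False using nd cyl_nonempty unfolding nowhere_dense_in_def by blast
    qed
    then obtain f where f: "f \<in> cyl s" "f \<notin> XX closure_of N" by blast
    have op: "openin XX (cyl s - XX closure_of N)"
      by (rule openin_diff[OF open_cyl[OF s] closedin_closure_of])
    then obtain u where u: "u\<in>S" "f \<in> cyl u" "cyl u \<subseteq> cyl s - XX closure_of N"
      using open_basis[OF op] f by blast
    then obtain t where t: "t\<in>S" "s \<subseteq>\<^sub>m t" "u \<subseteq>\<^sub>m t" "f \<in> cyl t" using join s f by blast
    have "N \<subseteq> XX closure_of N" by (rule closure_of_subset) (simp only: topsp subset_UNIV)
    then show "\<exists>t\<in>S. s \<subseteq>\<^sub>m t \<and> cyl t \<inter> N = {}"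
      using t u cyl_mono[OF t(3)] by blast
  qed
next
  assume H: "\<forall>s\<in>S. \<exists>t\<in>S. s \<subseteq>\<^sub>m t \<and> cyl t \<inter> N = {}"
  show "nowhere_dense_in XX N"
    unfolding nowhere_dense_in_def
  proof (rule conjI)
    show "N \<subseteq> topspace XX" by (simp only: topsp subset_UNIV)
    show "XX interior_of (XX closure_of N) = {}"
    proof (rule ccontr)
      assume "XX interior_of (XX closure_of N) \<noteq> {}"
      then obtain f where f: "f \<in> XX interior_of (XX closure_of N)" by blast
      then obtain s where s: "s\<in>S" "f \<in> cyl s" "cyl s \<subseteq> XX interior_of (XX closure_of N)"
        using open_basis[OF openin_interior_of f] by blast
      then obtain t where t: "t\<in>S" "s \<subseteq>\<^sub>m t" "cyl t \<inter> N = {}" using H by blast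
      obtain g where g: "g \<in> cyl t" using cyl_nonempty by blast
      have "g \<in> XX closure_of N"
        using g cyl_mono[OF t(2)] s(3) interior_of_subset[of XX "XX closure_of N"] by blast
      then have "\<exists>y\<in>N. y \<in> cyl t"
        using g open_cyl[OF t(1)] unfolding in_closure_of by meson
      then show False using t(3) by blast
    qed
  qed
qed

end

lemma co_basic:
  assumes "card_order r"
  shows "Card_order r" "Field r = UNIV" "Well_order r"
  using assms card_order_on_Card_order card_order_on_def by blast+

lemma co_total: "card_order r \<Longrightarrow> (a,b) \<in> r \<or> (b,a) \<in> r"
  using co_basic[of r] wo_rel.TOTALS[of r] unfolding wo_rel_def by blast

lemma co_trans: "card_order r \<Longrightarrow> (a,b) \<in> r \<Longrightarrow> (b,c) \<in> r \<Longrightarrow> (a,c) \<in> r"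
  using co_basic[of r] wo_rel.TRANS[of r] unfolding wo_rel_def trans_def by blast

lemma co_antisym: "card_order r \<Longrightarrow> (a,b) \<in> r \<Longrightarrow> (b,a) \<in> r \<Longrightarrow> a = b"
  using co_basic[of r] wo_rel.ANTISYM[of r] unfolding wo_rel_def antisym_def by blast

lemma co_underS_mono: "card_order r \<Longrightarrow> (a,b) \<in> r \<Longrightarrow> underS r a \<subseteq> underS r b"
  unfolding underS_def using co_trans co_antisym by fastforce

lemma (in cylsp) baire:
  fixes k :: "'k rel" and F :: "('a \<Rightarrow> 'b) set set"
  assumes k: "card_order k"
  and ub: "\<And>C. C \<subseteq> S \<Longrightarrow> (\<forall>c\<in>C. \<forall>d\<in>C. c \<subseteq>\<^sub>m d \<or> d \<subseteq>\<^sub>m c) \<Longrightarrow> |C| <o k \<Longrightarrow> \<exists>u\<in>S. \<forall>c\<in>C. c \<subseteq>\<^sub>m u"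
  and F: "|F| \<le>o k" and nd: "\<forall>N\<in>F. nowhere_dense_in XX N"
  shows "\<Union>F \<noteq> UNIV"
proof (cases "F = {}")
  case True then show ?thesis by simp
next
  case False
  note kb = co_basic[OF k]
  have Fu: "|F| \<le>o |UNIV :: 'k set|"
    using F card_of_Field_ordIso[OF kb(1)] kb(2) ordLeq_ordIso_trans ordIso_symmetric by metis
  have "\<exists>NN. NN ` (UNIV::'k set) = F" using iffD2[OF card_of_ordLeq2[OF False, of "UNIV::'k set"] Fu] .
  then obtain NN where NN: "NN ` (UNIV::'k set) = F" by blast
  have ndN: "\<forall>s\<in>S. \<exists>t\<in>S. s \<subseteq>\<^sub>m t \<and> cyl t \<inter> NN \<alpha> = {}" for \<alpha>
    using nd NN nd_iff by blast
  define ext where "ext \<alpha> s = (SOME t. t\<in>S \<and> s \<subseteq>\<^sub>m t \<and> cyl t \<inter> NN \<alpha> = {})" for \<alpha> s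
  define ubf where "ubf C = (SOME u. u\<in>S \<and> (\<forall>c\<in>C. c \<subseteq>\<^sub>m u))" for C
  define H where "H g \<alpha> = ext \<alpha> (ubf (g ` underS k \<alpha>))" for g \<alpha>
  interpret wo: wo_rel k using kb(3) unfolding wo_rel_def by blast
  have adm: "wo.adm_wo H" unfolding wo.adm_wo_def H_def
    by (metis image_cong)
  define g where "g = wo.worec H"
  have gfix: "g \<alpha> = H g \<alpha>" for \<alpha> using wo.worec_fixpoint[OF adm] g_def by metis
  have inv: "g \<alpha> \<in> S \<and> (\<forall>\<beta>\<in>underS k \<alpha>. g \<beta> \<subseteq>\<^sub>m g \<alpha>) \<and> cyl (g \<alpha>) \<inter> NN \<alpha> = {}" for \<alpha>
  proof (induction \<alpha> rule: wo.well_order_induct)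
    case (1 \<alpha>)
    let ?C = "g ` underS k \<alpha>"
    have IH: "g \<beta> \<in> S \<and> (\<forall>\<gamma>\<in>underS k \<beta>. g \<gamma> \<subseteq>\<^sub>m g \<beta>)" if "\<beta> \<in> underS k \<alpha>" for \<beta>
      using 1 that by (auto simp: underS_def)
    have CS: "?C \<subseteq> S" using IH by auto
    have chain: "\<forall>c\<in>?C. \<forall>d\<in>?C. c \<subseteq>\<^sub>m d \<or> d \<subseteq>\<^sub>m c"
    proof (intro ballI)
      fix c d assume "c \<in> ?C" "d \<in> ?C"
      then obtain \<beta> \<gamma> where b: "\<beta> \<in> underS k \<alpha>" "c = g \<beta>" and c: "\<gamma> \<in> underS k \<alpha>" "d = g \<gamma>" by blast
      show "c \<subseteq>\<^sub>m d \<or> d \<subseteq>\<^sub>m c"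
      proof (cases "\<beta> = \<gamma>")
        case True then show ?thesis using b c by (simp add: map_le_refl)
      next
        case False
        then have "\<beta> \<in> underS k \<gamma> \<or> \<gamma> \<in> underS k \<beta>" using co_total[OF k] by (auto simp: underS_def)
        then show ?thesis using IH b c by blast
      qed
    qed
    have card: "|?C| <o k"
      using card_of_image ordLeq_ordLess_trans card_of_underS[OF kb(1)] kb(2) by blast
    obtain u where "u\<in>S" "\<forall>c\<in>?C. c \<subseteq>\<^sub>m u" using ub[OF CS chain card] by blast
    then have U: "ubf ?C \<in> S \<and> (\<forall>c\<in>?C. c \<subseteq>\<^sub>m ubf ?C)" unfolding ubf_def using someI_ex[of "\<lambda>x. x\<in>S \<and> (\<forall>c\<in>?C. c \<subseteq>\<^sub>m x)"] by blast
    have "\<exists>t. t\<in>S \<and> ubf ?C \<subseteq>\<^sub>m t \<and> cyl t \<inter> NN \<alpha> = {}" using ndN[of \<alpha>] U by blast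
    then have E: "ext \<alpha> (ubf ?C) \<in> S \<and> ubf ?C \<subseteq>\<^sub>m ext \<alpha> (ubf ?C) \<and> cyl (ext \<alpha> (ubf ?C)) \<inter> NN \<alpha> = {}"
      unfolding ext_def by (rule someI_ex)
    have "g \<alpha> = ext \<alpha> (ubf ?C)" using gfix H_def by metis
    then have ga: "g \<alpha> = ext \<alpha> (ubf ?C)" .
    have "\<forall>\<beta>\<in>underS k \<alpha>. g \<beta> \<subseteq>\<^sub>m g \<alpha>"
    proof
      fix \<beta> assume "\<beta> \<in> underS k \<alpha>"
      then have "g \<beta> \<subseteq>\<^sub>m ubf ?C" using U by blast
      then show "g \<beta> \<subseteq>\<^sub>m g \<alpha>" using E ga map_le_trans by metis
    qed
    then show ?case using E ga by simp
  qed
  have comp: "g \<alpha> \<subseteq>\<^sub>m g \<beta> \<or> g \<beta> \<subseteq>\<^sub>m g \<alpha>" for \<alpha> \<beta>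
  proof (cases "\<alpha> = \<beta>")
    case True then show ?thesis by (simp add: map_le_refl)
  next
    case False
    then have "\<beta> \<in> underS k \<alpha> \<or> \<alpha> \<in> underS k \<beta>" using co_total[OF k] by (auto simp: underS_def)
    then show ?thesis using inv by blast
  qed
  define f where "f x = (if \<exists>\<alpha>. x \<in> dom (g \<alpha>) then the (g (SOME \<alpha>. x \<in> dom (g \<alpha>)) x) else undefined)" for x
  have fin: "f \<in> cyl (g \<alpha>)" for \<alpha>
    unfolding cyl_iff
  proof (intro allI impI)
    fix x y assume xy: "g \<alpha> x = Some y"
    then have ex: "\<exists>\<alpha>. x \<in> dom (g \<alpha>)" by blast
    let ?\<beta> = "SOME \<alpha>. x \<in> dom (g \<alpha>)"
    have "x \<in> dom (g ?\<beta>)" using ex by (rule someI_ex)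
    then obtain z where z: "g ?\<beta> x = Some z" by blast
    have "z = y" using comp[of \<alpha> ?\<beta>] xy z unfolding map_le_def by (metis domI option.inject)
    then show "f x = y" using z ex unfolding f_def by simp
  qed
  have "f \<notin> \<Union>F"
  proof
    assume "f \<in> \<Union>F"
    then obtain \<alpha> where "f \<in> NN \<alpha>" using NN by blast
    then show False using inv[of \<alpha>] fin[of \<alpha>] by blast
  qed
  then show ?thesis by blast
qed


lemma CWo: "Card_order r \<Longrightarrow> Well_order r"
  by (rule card_order_on_well_order_on)

lemma co_UNIV_iso: fixes k :: "'k rel" assumes "card_order k" shows "|UNIV :: 'k set| =o k"
  using card_of_Field_ordIso[OF co_basic(1)[OF assms]] co_basic(2)[OF assms] by simp

lemma meagre_union:
  fixes k :: "'k rel"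
  assumes k: "card_order k" "cinfinite k"
  and A: "A \<subseteq> meagre_ideal k X" "|A| \<le>o k"
  shows "\<Union>A \<in> meagre_ideal k X"
proof -
  have "\<forall>a\<in>A. \<exists>F. |F| \<le>o k \<and> (\<forall>N\<in>F. nowhere_dense_in X N) \<and> a = \<Union>F"
    using A unfolding meagre_ideal_def by blast
  then obtain FF where FF: "\<forall>a\<in>A. |FF a| \<le>o k \<and> (\<forall>N\<in>FF a. nowhere_dense_in X N) \<and> a = \<Union>(FF a)"
    by metis
  let ?F = "\<Union>a\<in>A. FF a"
  have "\<forall>a\<in>A. |FF a| \<le>o k" using FF by blast
  then have "|?F| \<le>o k"
    using card_of_UNION_ordLeq_infinite_Field[of k A FF] k(2) A(2) co_basic(1)[OF k(1)]
    unfolding cinfinite_def by blast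
  moreover have "\<Union>A = \<Union>?F"
  proof
    show "\<Union>A \<subseteq> \<Union>?F"
    proof
      fix x assume "x \<in> \<Union>A"
      then obtain a where a: "a \<in> A" "x \<in> a" by blast
      then have "x \<in> \<Union>(FF a)" using FF by metis
      then show "x \<in> \<Union>?F" using a by blast
    qed
    show "\<Union>?F \<subseteq> \<Union>A"
    proof
      fix x assume "x \<in> \<Union>?F"
      then obtain a where a: "a \<in> A" "x \<in> \<Union>(FF a)" by blast
      then have "x \<in> a" using FF by metis
      then show "x \<in> \<Union>A" using a by blast
    qed
  qed
  moreover have "\<forall>N\<in>?F. nowhere_dense_in X N" using FF by blast
  ultimately show ?thesis unfolding meagre_ideal_def by blast
qed

lemma add_cov_main:
  fixes k :: "'k rel" and X :: "'a topology"
  assumes k: "card_order k" "cinfinite k"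
  and baire: "\<And>F. |F| \<le>o k \<Longrightarrow> \<forall>N\<in>F. nowhere_dense_in X N \<Longrightarrow> \<Union>F \<noteq> topspace X"
  and cover: "\<exists>C. (\<forall>N\<in>C. nowhere_dense_in X N) \<and> \<Union>C = topspace X \<and> |C| \<le>o cardSuc k"
  shows "add_cov_is k X (cardSuc k)"
proof -
  let ?I = "meagre_ideal k X"
  have Ck: "Card_order k" using co_basic[OF k(1)] by blast
  have WS: "Well_order (cardSuc k)" by (rule CWo[OF cardSuc_Card_order[OF Ck]])
  have notI: "topspace X \<notin> ?I"
  proof
    assume "topspace X \<in> ?I"
    then have "\<exists>F. |F| \<le>o k \<and> (\<forall>N\<in>F. nowhere_dense_in X N) \<and> topspace X = \<Union>F"
      unfolding meagre_ideal_def by (rule CollectD)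
    then obtain F where FF: "|F| \<le>o k \<and> (\<forall>N\<in>F. nowhere_dense_in X N) \<and> topspace X = \<Union>F"
      by (rule exE)
    show False using baire[OF conjunct1[OF FF] conjunct1[OF conjunct2[OF FF]]] conjunct2[OF conjunct2[OF FF]] by simp
  qed
  have small: "\<Union>A \<in> ?I" if "A \<subseteq> ?I" "\<not> cardSuc k \<le>o |A|" for A :: "'a set set"
  proof -
    have "|A| <o cardSuc k" by (rule iffD1[OF not_ordLeq_iff_ordLess[OF card_of_Well_order WS] that(2)])
    then have "|A| \<le>o k" by (rule iffD1[OF cardSuc_ordLeq_ordLess[OF Ck card_of_Card_order]])
    then show ?thesis using meagre_union[OF k that(1)] by blast
  qed
  obtain C where C: "\<forall>N\<in>C. nowhere_dense_in X N" "\<Union>C = topspace X" "|C| \<le>o cardSuc k"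
    using cover by blast
  have CI: "C \<subseteq> ?I"
  proof
    fix N assume N: "N \<in> C"
    have "|{N}| \<le>o |UNIV :: 'k set|" by (rule card_of_singl_ordLeq) simp
    then have 1: "|{N}| \<le>o k" using ordLeq_ordIso_trans[OF _ co_UNIV_iso[OF k(1)]] by blast
    have 2: "N = \<Union>{N}" by simp
    have 3: "\<forall>M\<in>{N}. nowhere_dense_in X M" using C(1) N by simp
    show "N \<in> ?I" unfolding meagre_ideal_def using 1 2 3 by (intro CollectI exI[of _ "{N}"]) simp
  qed
  have "cardSuc k \<le>o |C|" using small[OF CI] C(2) notI by metis
  then have Ciso: "|C| =o cardSuc k" using iffD2[OF ordIso_iff_ordLeq] C(3) by blast
  have addp: "\<forall>A. A \<subseteq> ?I \<and> \<Union>A \<notin> ?I \<longrightarrow> cardSuc k \<le>o |A|" using small by metis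
  have covp: "\<forall>C. C \<subseteq> ?I \<and> \<Union>C = topspace X \<longrightarrow> cardSuc k \<le>o |C|" using small notI by metis
  show ?thesis unfolding add_cov_is_def add_is_def cov_is_def
    using addp covp CI C(2) notI Ciso by metis
qed

lemma (in cylsp) cover_lemma:
  fixes k :: "'k rel" and \<Xi> :: "'c set" and W :: "'c \<Rightarrow> ('a \<rightharpoonup> 'b) set"
  assumes k: "card_order k"
  and Xi: "|\<Xi>| =o cardSuc k"
  and Wp: "\<And>\<xi> s. \<xi>\<in>\<Xi> \<Longrightarrow> s\<in>S \<Longrightarrow> \<exists>t\<in>S. s \<subseteq>\<^sub>m t \<and> (\<exists>w\<in>W \<xi>. w \<subseteq>\<^sub>m t)"
  and few: "\<And>f. |{\<xi>\<in>\<Xi>. \<exists>w\<in>W \<xi>. f \<in> cyl w}| \<le>o k"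
  shows "\<exists>C. (\<forall>N\<in>C. nowhere_dense_in XX N) \<and> \<Union>C = topspace XX \<and> |C| \<le>o cardSuc k"
proof -
  have Ck: "Card_order k" using co_basic[OF k] by blast
  define NN where "NN \<xi> = UNIV - (\<Union>w\<in>W \<xi>. cyl w)" for \<xi>
  let ?C = "NN ` \<Xi>"
  have nd: "nowhere_dense_in XX (NN \<xi>)" if xi: "\<xi> \<in> \<Xi>" for \<xi>
    unfolding nd_iff
  proof
    fix s assume s: "s \<in> S"
    obtain t w where t: "t\<in>S" "s \<subseteq>\<^sub>m t" "w \<in> W \<xi>" "w \<subseteq>\<^sub>m t" using Wp[OF xi s] by blast
    then have "cyl t \<inter> NN \<xi> = {}" using cyl_mono[OF t(4)] unfolding NN_def by blast
    then show "\<exists>t\<in>S. s \<subseteq>\<^sub>m t \<and> cyl t \<inter> NN \<xi> = {}" using t by blast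
  qed
  have covers: "\<Union>?C = UNIV"
  proof -
    have "f \<in> \<Union>?C" for f
    proof -
      let ?Q = "{\<xi>\<in>\<Xi>. \<exists>w\<in>W \<xi>. f \<in> cyl w}"
      have "\<not> \<Xi> \<subseteq> ?Q"
      proof
        assume "\<Xi> \<subseteq> ?Q"
        then have "|\<Xi>| \<le>o |?Q|" by (rule card_of_mono1)
        then have "|\<Xi>| \<le>o k" using ordLeq_transitive[OF _ few] by blast
        then have "cardSuc k \<le>o k" using ordIso_ordLeq_trans[OF ordIso_symmetric[OF Xi]] by blast
        then show False using not_ordLess_ordLeq[OF cardSuc_greater[OF Ck]] by blast
      qed
      then obtain \<xi> where "\<xi> \<in> \<Xi>" "\<xi> \<notin> ?Q" by blast
      then show ?thesis unfolding NN_def by blast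
    qed
    then show ?thesis by blast
  qed
  have "|?C| \<le>o cardSuc k" using ordLeq_ordIso_trans[OF card_of_image Xi] by blast
  moreover have "\<Union>?C = topspace XX" by (simp only: covers topsp)
  moreover have "\<forall>N\<in>?C. nowhere_dense_in XX N" using nd by blast
  ultimately show ?thesis by (intro exI[of _ ?C] conjI)
qed


lemma finite_lt:
  assumes "finite A" "Card_order r" "cinfinite r" shows "|A| <o r"
proof -
  have "Well_order (card_of A)" "Well_order r" "finite (Field (card_of A))" "\<not> finite (Field r)"
    using assms card_of_Well_order CWo by (auto simp: cinfinite_def Field_card_of)
  then show ?thesis by (rule finite_ordLess_infinite)
qed

lemma Un_lt:
  assumes "|A| <o r" "|B| <o r" "Card_order r" "cinfinite r" shows "|A \<union> B| <o r"
  using card_of_Un_ordLess_infinite_Field[of r A B] assms unfolding cinfinite_def by blast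

lemma insert_lt:
  assumes "|A| <o r" "Card_order r" "cinfinite r" shows "|insert x A| <o r"
proof -
  have "|{x} \<union> A| <o r" using Un_lt[OF finite_lt[of "{x}" r] assms(1)] assms by simp
  then show ?thesis by simp
qed

lemma chain_union:
  assumes ch: "\<forall>c\<in>C. \<forall>d\<in>C. c \<subseteq>\<^sub>m d \<or> d \<subseteq>\<^sub>m c"
  shows "\<exists>u. (\<forall>c\<in>C. c \<subseteq>\<^sub>m u) \<and> dom u = (\<Union>c\<in>C. dom c)"
proof -
  define u where "u x = (if \<exists>c\<in>C. x \<in> dom c then (SOME c. c\<in>C \<and> x\<in>dom c) x else None)" for x
  have "c \<subseteq>\<^sub>m u" if c: "c \<in> C" for c
    unfolding map_le_def
  proof
    fix x assume x: "x \<in> dom c"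
    let ?d = "SOME c. c\<in>C \<and> x\<in>dom c"
    have ex: "\<exists>c\<in>C. x \<in> dom c" using c x by blast
    have d: "?d \<in> C \<and> x \<in> dom ?d" using someI_ex[of "\<lambda>c. c\<in>C \<and> x\<in>dom c"] ex by blast
    have "c x = ?d x" using ch c d x unfolding map_le_def by (metis domD domI)
    then show "c x = u x" using ex unfolding u_def by simp
  qed
  moreover have "dom u = (\<Union>c\<in>C. dom c)"
  proof
    show "dom u \<subseteq> (\<Union>c\<in>C. dom c)" unfolding u_def dom_def by (auto split: if_splits)
    show "(\<Union>c\<in>C. dom c) \<subseteq> dom u"
    proof
      fix x assume "x \<in> (\<Union>c\<in>C. dom c)"
      then obtain c where c: "c\<in>C" "x \<in> dom c" by blast
      then have "c \<subseteq>\<^sub>m u" using calculation by blast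
      then show "x \<in> dom u" using c(2) map_le_implies_dom_le by blast
    qed
  qed
  ultimately show ?thesis by blast
qed

definition Sbox :: "'c rel \<Rightarrow> ('a \<rightharpoonup> 'b) set" where "Sbox r = {s. |dom s| <o r}"

lemma box_top_eq: fixes r :: "'c rel"
  shows "(box_top r :: ('a \<Rightarrow> 'b) topology) = topology_generated_by (cyl ` (Sbox r :: ('a \<rightharpoonup> 'b) set))"
proof -
  have "{cyl s |s :: 'a \<rightharpoonup> 'b. |dom s| <o r} = cyl ` Sbox r" unfolding Sbox_def by blast
  then show ?thesis unfolding box_top_def by simp
qed

lemma box_cylsp:
  fixes r :: "'c rel"
  assumes r: "Card_order r" "cinfinite r"
  shows "cylsp (Sbox r :: ('a \<rightharpoonup> 'b) set)"
proof
  fix f :: "'a \<Rightarrow> 'b"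
  have "Map.empty \<in> Sbox r" unfolding Sbox_def using finite_lt[of "{}" r] r by simp
  moreover have "f \<in> cyl Map.empty" by (simp add: cyl_iff)
  ultimately show "\<exists>s\<in>Sbox r. f \<in> cyl s" by blast
next
  fix s u :: "'a \<rightharpoonup> 'b" and f
  assume s: "s \<in> Sbox r" and u: "u \<in> Sbox r" and fs: "f \<in> cyl s" and fu: "f \<in> cyl u"
  have "dom (s ++ u) = dom s \<union> dom u" by auto
  moreover have "|dom s| <o r" "|dom u| <o r" using s u unfolding Sbox_def by auto
  ultimately have "|dom (s ++ u)| <o r" using Un_lt[OF _ _ r] by simp
  then have "s ++ u \<in> Sbox r" unfolding Sbox_def by simp
  moreover have "s \<subseteq>\<^sub>m s ++ u"
    using fs fu unfolding map_le_def cyl_iff by (auto simp: map_add_def split: option.splits)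
  moreover have "u \<subseteq>\<^sub>m s ++ u" by (rule map_le_map_add)
  moreover have "f \<in> cyl (s ++ u)"
    using fs fu unfolding cyl_iff by (auto simp: map_add_def split: option.splits)
  ultimately show "\<exists>t\<in>Sbox r. s \<subseteq>\<^sub>m t \<and> u \<subseteq>\<^sub>m t \<and> f \<in> cyl t" by blast
qed

lemma box_ub_regular:
  fixes k :: "'k rel" and C :: "('a \<rightharpoonup> 'b) set"
  assumes k: "Card_order k" "cinfinite k" "regularCard k"
  and C: "C \<subseteq> Sbox k" "\<forall>c\<in>C. \<forall>d\<in>C. c \<subseteq>\<^sub>m d \<or> d \<subseteq>\<^sub>m c" "|C| <o k"
  shows "\<exists>u\<in>Sbox k. \<forall>c\<in>C. c \<subseteq>\<^sub>m u"
proof -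
  obtain u where u: "\<forall>c\<in>C. c \<subseteq>\<^sub>m u" "dom u = (\<Union>c\<in>C. dom c)" using chain_union[OF C(2)] by blast
  have "\<forall>c\<in>C. |dom c| <o k" using C(1) unfolding Sbox_def by blast
  then have "|\<Union>c\<in>C. dom c| <o k"
    using card_of_UNION_ordLess_infinite_Field_regularCard[of k C dom] k C(3) by blast
  then have "u \<in> Sbox k" unfolding Sbox_def using u(2) by simp
  then show ?thesis using u(1) by blast
qed


locale sing =
  fixes k :: "'k rel" and m :: "'m rel"
  assumes k: "card_order k" "cinfinite k" "regularCard k"
  and m: "card_order m" and cof: "cof_is m k" and km: "k <o m"
begin

lemma Ck: "Card_order k" using co_basic(1)[OF k(1)] .
lemma Cm: "Card_order m" using co_basic(1)[OF m] .
lemma Fm: "Field m = UNIV" using co_basic(2)[OF m] .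
lemma Fk: "Field k = UNIV" using co_basic(2)[OF k(1)] .
lemma m_inf: "cinfinite m" using cinfinite_mono[OF ordLess_imp_ordLeq[OF km] k(2)] .
lemma UNIVm: "|UNIV::'m set| =o m" using co_UNIV_iso[OF m] .
lemma UNIVk: "|UNIV::'k set| =o k" using co_UNIV_iso[OF k(1)] .
lemma infk: "infinite (UNIV :: 'k set)" using k(2) Fk unfolding cinfinite_def by simp
lemma infm: "infinite (UNIV :: 'm set)" using m_inf Fm unfolding cinfinite_def by simp

lemma S0_ex: "\<exists>S0. cofinal S0 m \<and> |S0| =o k"
  using cof unfolding cof_is_def by blast

lemma bounded:
  fixes K :: "'m set"
  assumes "|K| <o k" shows "\<exists>b. \<forall>x\<in>K. (x,b) \<in> m"
proof -
  have "\<not> cofinal K m"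
  proof
    assume c: "cofinal K m"
    have "K \<subseteq> Field m" by (simp add: Fm)
    then have "k \<le>o |K|" using cof c unfolding cof_is_def by blast
    then show False using not_ordLess_ordLeq[OF assms] by blast
  qed
  then obtain a where a: "\<forall>b\<in>K. a = b \<or> (a,b) \<notin> m" unfolding cofinal_def Fm by blast
  have "(x,a) \<in> m" if "x\<in>K" for x using a that co_total[OF m, of x a] co_total[OF m, of a a] by auto
  then show ?thesis by blast
qed

lemma below:
  fixes A :: "'x set"
  assumes "|A| <o m" shows "\<exists>a. |A| \<le>o |underS m a|"
proof -
  obtain a where a: "a \<in> Field m" "|A| =o Restr m (underS m a)"
    using iffD1[OF ordLess_iff_ordIso_Restr[OF CWo[OF Cm] card_of_Well_order] assms] by blast
  have "|Field (card_of A)| \<le>o |Field (Restr m (underS m a))|"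
    by (rule card_of_mono2[OF ordIso_imp_ordLeq[OF a(2)]])
  then have 1: "|A| \<le>o |Field (Restr m (underS m a))|" by (simp add: Field_card_of)
  have 2: "|Field (Restr m (underS m a))| \<le>o |underS m a|" by (rule card_of_mono1[OF Field_Restr_subset])
  show ?thesis using ordLeq_transitive[OF 1 2] by blast
qed

lemma underS_lt: "|underS m a| <o m"
  using card_of_underS[OF Cm] Fm by simp

lemma lt_m_of_lt_k: "|A| <o k \<Longrightarrow> |A| <o m"
  by (rule ordLess_transitive[OF _ km])

lemma bound_many:
  fixes I :: "'i set" and A :: "'i \<Rightarrow> 'x set"
  assumes I: "|I| <o k" and A: "\<forall>i\<in>I. |A i| <o m"
  shows "\<exists>b. infinite (underS m b) \<and> |I| \<le>o |underS m b| \<and> (\<forall>i\<in>I. |A i| \<le>o card_of (underS m b))"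
proof -
  have "\<forall>i\<in>I. \<exists>a. |A i| \<le>o |underS m a|"
  proof
    fix i assume i: "i \<in> I"
    show "\<exists>a. |A i| \<le>o |underS m a|" by (rule below) (use A i in blast)
  qed
  then obtain a where a: "\<forall>i\<in>I. |A i| \<le>o |underS m (a i)|" by metis
  have "|UNIV :: 'k set| <o m" using ordIso_ordLess_trans[OF UNIVk km] .
  then obtain a1 where a1: "|UNIV :: 'k set| \<le>o |underS m a1|" using below by blast
  have "|I| <o m" using lt_m_of_lt_k[OF I] .
  then obtain a2 where a2: "|I| \<le>o |underS m a2|" using below by blast
  let ?K = "insert a1 (insert a2 (a ` I))"
  have "|a ` I| <o k" using ordLeq_ordLess_trans[OF card_of_image I] .
  then have "|?K| <o k" by (rule insert_lt[OF insert_lt[OF _ Ck k(2)] Ck k(2)])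
  then obtain b where b: "\<forall>x\<in>?K. (x,b) \<in> m" using bounded by blast
  have sub: "underS m x \<subseteq> underS m b" if "x \<in> ?K" for x using co_underS_mono[OF m, of x b] b that by blast
  have "infinite (underS m a1)"
  proof
    assume "finite (underS m a1)"
    then have "finite (UNIV :: 'k set)" using card_of_ordLeq_finite[OF a1] by blast
    then show False using infk by blast
  qed
  then have inf: "infinite (underS m b)" using sub[of a1] finite_subset by blast
  have "|I| \<le>o |underS m b|" using ordLeq_transitive[OF a2 card_of_mono1[OF sub[of a2]]] by simp
  moreover have "|A i| \<le>o |underS m b|" if "i \<in> I" for i
    using ordLeq_transitive[OF _ card_of_mono1[OF sub[of "a i"]]] a that by blast
  ultimately show ?thesis using inf by blast
qed

lemma sing_union:
  fixes I :: "'i set" and A :: "'i \<Rightarrow> 'x set"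
  assumes I: "|I| <o k" and A: "\<forall>i\<in>I. |A i| <o m"
  shows "|\<Union>i\<in>I. A i| <o m"
proof -
  obtain b where b: "infinite (underS m b)" "|I| \<le>o |underS m b|" "\<forall>i\<in>I. |A i| \<le>o |underS m b|"
    using bound_many[OF I A] by blast
  have "|\<Union>i\<in>I. A i| \<le>o |underS m b|" by (rule card_of_UNION_ordLeq_infinite[OF b])
  then show ?thesis using ordLeq_ordLess_trans[OF _ underS_lt] by blast
qed

lemma times_lt:
  fixes A :: "'x set" and B :: "'y set"
  assumes A: "|A| <o m" and B: "|B| <o m"
  shows "|A \<times> B| <o m"
proof -
  obtain aA where aA: "|A| \<le>o |underS m aA|" using below[OF A] by blast
  obtain aB where aB: "|B| \<le>o |underS m aB|" using below[OF B] by blast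
  have "|UNIV :: 'k set| <o m" using ordIso_ordLess_trans[OF UNIVk km] .
  then obtain a1 where a1: "|UNIV :: 'k set| \<le>o |underS m a1|" using below by blast
  have "|{aA, aB, a1}| <o k" by (rule finite_lt[OF _ Ck k(2)]) simp
  then obtain b where b: "\<forall>x\<in>{aA, aB, a1}. (x,b) \<in> m" using bounded by blast
  have sub: "underS m x \<subseteq> underS m b" if "x \<in> {aA, aB, a1}" for x using co_underS_mono[OF m, of x b] b that by blast
  have "infinite (underS m a1)"
  proof
    assume "finite (underS m a1)"
    then have "finite (UNIV :: 'k set)" using card_of_ordLeq_finite[OF a1] by blast
    then show False using infk by blast
  qed
  then have inf: "infinite (underS m b)" using sub[of a1] finite_subset by blast
  have 1: "|A| \<le>o |underS m b|" using ordLeq_transitive[OF aA card_of_mono1[OF sub[of aA]]] by simp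
  have 2: "|B| \<le>o |underS m b|" using ordLeq_transitive[OF aB card_of_mono1[OF sub[of aB]]] by simp
  have inf': "\<not> finite (Field (card_of (underS m b)))" using inf by (simp add: Field_card_of)
  have "|A \<times> B| \<le>o |underS m b|"
    by (rule card_of_Times_ordLeq_infinite_Field[OF inf' 1 2 card_of_Card_order])
  then show ?thesis using ordLeq_ordLess_trans[OF _ underS_lt] by blast
qed

end

context sing begin

lemma m_not_regular: "\<not> regularCard m"
proof
  assume reg: "regularCard m"
  obtain S0 where S0: "cofinal S0 m" "|S0| =o k" using S0_ex by blast
  have "S0 \<subseteq> Field m" by (simp add: Fm)
  then have "|S0| =o m" using reg S0(1) unfolding regularCard_def by blast
  then have "k =o m" using ordIso_transitive[OF ordIso_symmetric[OF S0(2)]] by blast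
  then show False using not_ordLess_ordIso[OF km] by blast
qed

lemma cardSuc_lt:
  fixes r :: "'r rel"
  assumes r: "Card_order r" "cinfinite r" "r <o m"
  shows "cardSuc r <o m"
proof -
  have le: "cardSuc r \<le>o m" by (rule iffD1[OF cardSuc_ordLess_ordLeq[OF r(1) Cm] r(3)])
  have "\<not> cardSuc r =o m"
  proof
    assume iso: "cardSuc r =o m"
    have "regularCard m"
      by (rule regularCard_ordIso[OF iso Cinfinite_cardSuc[OF conjI[OF r(2) r(1)]] regularCard_cardSuc[OF conjI[OF r(2) r(1)]]])
    then show False using m_not_regular by blast
  qed
  then show ?thesis using le ordLeq_iff_ordLess_or_ordIso by blast
qed

lemma Xi_ex: "\<exists>\<Xi> :: 'm set. |\<Xi>| =o cardSuc k"
proof -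
  have CS: "Card_order (cardSuc k)" by (rule cardSuc_Card_order[OF Ck])
  have 1: "|Field (cardSuc k)| =o cardSuc k" by (rule card_of_Field_ordIso[OF CS])
  have 2: "cardSuc k \<le>o m" by (rule iffD1[OF cardSuc_ordLess_ordLeq[OF Ck Cm] km])
  have "|Field (cardSuc k)| \<le>o |UNIV :: 'm set|"
    using ordLeq_transitive[OF ordLeq_transitive[OF ordIso_imp_ordLeq[OF 1] 2] ordIso_imp_ordLeq[OF ordIso_symmetric[OF UNIVm]]] .
  then obtain B :: "'m set" where "|Field (cardSuc k)| =o |B|"
    using iffD1[OF internalize_card_of_ordLeq2] by blast
  then have "|B| =o cardSuc k" using ordIso_transitive[OF ordIso_symmetric 1] by blast
  then show ?thesis by blast
qed

lemma Xi_lt: "|\<Xi>| =o cardSuc k \<Longrightarrow> |\<Xi>| <o m"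
  using ordIso_ordLess_trans[OF _ cardSuc_lt[OF Ck k(2) km]] by blast

end

lemma CO_total: assumes "Card_order r" "a \<in> Field r" "b \<in> Field r" shows "(a,b) \<in> r \<or> (b,a) \<in> r"
proof -
  have "\<forall>a\<in>Field r. \<forall>b\<in>Field r. (a,b) \<in> r \<or> (b,a) \<in> r" by (rule wo_rel.TOTALS[OF Card_order_wo_rel[OF assms(1)]])
  then show ?thesis using assms(2,3) by blast
qed

lemma CO_trans: assumes "Card_order r" "(a,b) \<in> r" "(b,c) \<in> r" shows "(a,c) \<in> r"
  by (rule transD[OF wo_rel.TRANS[OF Card_order_wo_rel[OF assms(1)]] assms(2,3)])

lemma CO_antisym: assumes "Card_order r" "(a,b) \<in> r" "(b,a) \<in> r" shows "a = b"
  by (rule antisymD[OF wo_rel.ANTISYM[OF Card_order_wo_rel[OF assms(1)]] assms(2,3)])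

lemma aboveS_sub: "Card_order r \<Longrightarrow> (c,c') \<in> r \<Longrightarrow> aboveS r c' \<subseteq> aboveS r c"
proof
  fix x assume C: "Card_order r" and cc: "(c,c') \<in> r" and x: "x \<in> aboveS r c'"
  then have x1: "x \<noteq> c'" "(c',x) \<in> r" unfolding aboveS_def by auto
  have "(c,x) \<in> r" by (rule CO_trans[OF C cc x1(2)])
  moreover have "x \<noteq> c"
  proof
    assume "x = c"
    then have "(c', c) \<in> r" using x1 by simp
    then have "c = c'" using CO_antisym[OF C cc] by blast
    then show False using x1 \<open>x = c\<close> by simp
  qed
  ultimately show "x \<in> aboveS r c" unfolding aboveS_def by blast
qed

lemma aboveS_Field: "aboveS r c \<subseteq> Field r"
proof
  fix x assume "x \<in> aboveS r c"
  then have "(c,x) \<in> r" unfolding aboveS_def by simp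
  then show "x \<in> Field r" by (rule FieldI2)
qed

lemma aboveS_ne: assumes "Card_order r" "\<not> finite (Field r)" "c \<in> Field r" shows "aboveS r c \<noteq> {}"
proof -
  obtain b where "b \<in> Field r" "c \<noteq> b" "(c,b) \<in> r" using infinite_Card_order_limit[OF assms] by blast
  then have "b \<in> aboveS r c" unfolding aboveS_def by simp
  then show ?thesis by blast
qed

lemma (in sing) tails:
  fixes S0 :: "'m set"
  assumes S0: "cofinal S0 m" "|S0| =o k"
  shows "\<exists>T :: 'm \<Rightarrow> 'm set set. (\<forall>j. \<forall>Y\<in>T j. Y \<noteq> {} \<and> |Y| <o m)
     \<and> (\<forall>j. \<forall>Y\<in>T j. \<forall>Y'\<in>T j. Y \<inter> Y' \<noteq> {})
     \<and> (\<forall>D :: 'm set. |D| <o m \<longrightarrow> (\<exists>j\<in>S0. \<exists>Y\<in>T j. Y \<inter> D = {}))"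
proof -
  have "Cinfinite |S0|" by (rule Cinfinite_cong[OF ordIso_symmetric[OF S0(2)] conjI[OF k(2) Ck]])
  then have S0inf: "infinite S0" unfolding cinfinite_def by (simp add: Field_card_of)
  have S0lt: "|S0| <o m" by (rule ordIso_ordLess_trans[OF S0(2) km])
  define lam where "lam j = card_of (underS m j \<union> S0)" for j
  define nu where "nu j = cardSuc (lam j)" for j
  have lamC: "Card_order (lam j)" for j unfolding lam_def by (rule card_of_Card_order)
  have laminf: "cinfinite (lam j)" for j unfolding cinfinite_def lam_def Field_card_of using S0inf by simp
  have lamlt: "lam j <o m" for j unfolding lam_def by (rule Un_lt[OF underS_lt S0lt Cm m_inf])
  have nuC: "Card_order (nu j)" for j unfolding nu_def by (rule cardSuc_Card_order[OF lamC])
  have nuinf: "\<not> finite (Field (nu j))" for j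
    using Cinfinite_cardSuc[OF conjI[OF laminf lamC]] unfolding nu_def cinfinite_def by blast
  have nureg: "regularCard (nu j)" for j unfolding nu_def by (rule regularCard_cardSuc[OF conjI[OF laminf lamC]])
  have nult: "nu j <o m" for j unfolding nu_def by (rule cardSuc_lt[OF lamC laminf lamlt])
  have lamnu: "lam j <o nu j" for j unfolding nu_def by (rule cardSuc_greater[OF lamC])
  have FnuU: "|Field (nu j)| \<le>o |UNIV :: 'm set|" for j
    using ordLeq_transitive[OF ordIso_imp_ordLeq[OF card_of_Field_ordIso[OF nuC]]
        ordLeq_transitive[OF ordLess_imp_ordLeq[OF nult] ordIso_imp_ordLeq[OF ordIso_symmetric[OF UNIVm]]]] .
  have "\<forall>j. \<exists>e :: _ \<Rightarrow> 'm. inj_on e (Field (nu j))"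
  proof
    fix j
    show "\<exists>e :: _ \<Rightarrow> 'm. inj_on e (Field (nu j))" using iffD2[OF card_of_ordLeq FnuU[of j]] by blast
  qed
  then obtain e :: "'m \<Rightarrow> 'm set \<Rightarrow> 'm" where e: "\<And>j. inj_on (e j) (Field (nu j))" by metis
  define T where "T j = {e j ` aboveS (nu j) c | c. c \<in> Field (nu j)}" for j
  have P1: "\<forall>j. \<forall>Y\<in>T j. Y \<noteq> {} \<and> |Y| <o m"
  proof (intro allI ballI)
    fix j Y assume "Y \<in> T j"
    then obtain c where c: "c \<in> Field (nu j)" "Y = e j ` aboveS (nu j) c" unfolding T_def by blast
    have Yne: "Y \<noteq> {}" using c aboveS_ne[OF nuC nuinf c(1)] by blast
    have Yle: "|Y| \<le>o |Field (nu j)|"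
      unfolding c(2) by (rule ordLeq_transitive[OF card_of_image card_of_mono1[OF aboveS_Field]])
    have "|Y| <o m"
      by (rule ordLeq_ordLess_trans[OF ordLeq_transitive[OF Yle ordIso_imp_ordLeq[OF card_of_Field_ordIso[OF nuC]]] nult])
    then show "Y \<noteq> {} \<and> |Y| <o m" using Yne by blast
  qed
  have P2: "\<forall>j. \<forall>Y\<in>T j. \<forall>Y'\<in>T j. Y \<inter> Y' \<noteq> {}"
  proof (intro allI ballI)
    fix j Y Y' assume "Y \<in> T j" "Y' \<in> T j"
    then obtain c c' where c: "c \<in> Field (nu j)" "Y = e j ` aboveS (nu j) c"
      and c': "c' \<in> Field (nu j)" "Y' = e j ` aboveS (nu j) c'" unfolding T_def by blast
    have "aboveS (nu j) c' \<subseteq> aboveS (nu j) c \<or> aboveS (nu j) c \<subseteq> aboveS (nu j) c'"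
      using CO_total[OF nuC c(1) c'(1)] aboveS_sub[OF nuC] by blast
    then show "Y \<inter> Y' \<noteq> {}" using c c' aboveS_ne[OF nuC nuinf c(1)] aboveS_ne[OF nuC nuinf c'(1)] by blast
  qed
  have P3: "\<forall>D :: 'm set. |D| <o m \<longrightarrow> (\<exists>j\<in>S0. \<exists>Y\<in>T j. Y \<inter> D = {})"
  proof (intro allI impI)
    fix D :: "'m set" assume D: "|D| <o m"
    obtain a where a: "|D| \<le>o |underS m a|" using below[OF D] by blast
    obtain j where j: "j \<in> S0" "a \<noteq> j" "(a,j) \<in> m" using S0(1) Fm unfolding cofinal_def by blast
    have "underS m a \<subseteq> underS m j \<union> S0" using co_underS_mono[OF m j(3)] by blast
    then have "|D| \<le>o lam j" unfolding lam_def by (rule ordLeq_transitive[OF a card_of_mono1])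
    then have Dnu: "|D| <o nu j" by (rule ordLeq_ordLess_trans[OF _ lamnu])
    define P where "P = {x \<in> Field (nu j). e j x \<in> D}"
    have "inj_on (e j) P" using e[of j] unfolding P_def by (rule inj_on_subset) blast
    moreover have "e j ` P \<subseteq> D" unfolding P_def by blast
    ultimately have "\<exists>f. inj_on f P \<and> f ` P \<subseteq> D" by blast
    then have "|P| \<le>o |D|" by (rule iffD1[OF card_of_ordLeq])
    then have Plt: "|P| <o nu j" by (rule ordLeq_ordLess_trans[OF _ Dnu])
    have "\<not> cofinal P (nu j)"
    proof
      assume "cofinal P (nu j)"
      moreover have "P \<subseteq> Field (nu j)" unfolding P_def by blast
      ultimately have "|P| =o nu j" using nureg[of j] unfolding regularCard_def by blast
      then show False using not_ordLess_ordIso[OF Plt] by blast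
    qed
    then obtain c where c: "c \<in> Field (nu j)" "\<forall>b\<in>P. c = b \<or> (c,b) \<notin> nu j"
      unfolding cofinal_def by blast
    have "e j ` aboveS (nu j) c \<in> T j" unfolding T_def using c(1) by blast
    moreover have "e j ` aboveS (nu j) c \<inter> D = {}"
    proof (rule ccontr)
      assume "e j ` aboveS (nu j) c \<inter> D \<noteq> {}"
      then obtain x where x: "x \<in> aboveS (nu j) c" "e j x \<in> D" by blast
      then have "x \<in> P" unfolding P_def using aboveS_Field[of "nu j" c] by blast
      then show False using c(2) x(1) unfolding aboveS_def by blast
    qed
    ultimately show "\<exists>j\<in>S0. \<exists>Y\<in>T j. Y \<inter> D = {}" using j(1) by blast
  qed
  show ?thesis using P1 P2 P3 by blast
qed


lemma (in cylsp) add_cov_gen: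
  fixes k :: "'k rel" and \<Xi> :: "'c set"
  assumes k: "card_order k" "cinfinite k"
  and ub: "\<And>C. C \<subseteq> S \<Longrightarrow> (\<forall>c\<in>C. \<forall>d\<in>C. c \<subseteq>\<^sub>m d \<or> d \<subseteq>\<^sub>m c) \<Longrightarrow> |C| <o k \<Longrightarrow> \<exists>u\<in>S. \<forall>c\<in>C. c \<subseteq>\<^sub>m u"
  and Xi: "|\<Xi>| =o cardSuc k"
  and Wp: "\<And>\<xi> s. \<xi>\<in>\<Xi> \<Longrightarrow> s\<in>S \<Longrightarrow> \<exists>t\<in>S. s \<subseteq>\<^sub>m t \<and> (\<exists>w\<in>W \<xi>. w \<subseteq>\<^sub>m t)"
  and few: "\<And>f. |{\<xi>\<in>\<Xi>. \<exists>w\<in>W \<xi>. f \<in> cyl w}| \<le>o k"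
  shows "add_cov_is k XX (cardSuc k)"
proof (rule add_cov_main[OF k])
  fix F assume F: "|F| \<le>o k" "\<forall>N\<in>F. nowhere_dense_in XX N"
  have "\<Union>F \<noteq> UNIV" by (rule baire[OF k(1) ub F])
  then show "\<Union>F \<noteq> topspace XX" unfolding topsp .
next
  show "\<exists>C. (\<forall>N\<in>C. nowhere_dense_in XX N) \<and> \<Union>C = topspace XX \<and> |C| \<le>o cardSuc k"
    by (rule cover_lemma[OF k(1) Xi Wp few])
qed

context sing begin

lemma space_A: "add_cov_is k (box_top k :: ('k \<Rightarrow> 'm) topology) (cardSuc k)"
proof -
  interpret cylsp "Sbox k :: ('k \<rightharpoonup> 'm) set" by (rule box_cylsp[OF Ck k(2)])
  obtain \<Xi> :: "'m set" where Xi: "|\<Xi>| =o cardSuc k" using Xi_ex by blast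
  define W :: "'m \<Rightarrow> ('k \<rightharpoonup> 'm) set" where "W \<xi> = {[i \<mapsto> \<xi>] | i. True}" for \<xi>
  have "add_cov_is k XX (cardSuc k)"
  proof (rule add_cov_gen[OF k(1,2) _ Xi])
    fix C :: "('k \<rightharpoonup> 'm) set"
    assume "C \<subseteq> Sbox k" "\<forall>c\<in>C. \<forall>d\<in>C. c \<subseteq>\<^sub>m d \<or> d \<subseteq>\<^sub>m c" "|C| <o k"
    then show "\<exists>u\<in>Sbox k. \<forall>c\<in>C. c \<subseteq>\<^sub>m u" by (rule box_ub_regular[OF Ck k(2,3)])
  next
    fix \<xi> :: 'm and s :: "'k \<rightharpoonup> 'm" assume s: "s \<in> Sbox k"
    then have sl: "|dom s| <o k" unfolding Sbox_def by simp
    have "dom s \<noteq> UNIV"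
    proof
      assume "dom s = UNIV"
      then have lt: "|UNIV :: 'k set| <o k" using sl by simp
      show False using not_ordLess_ordIso[OF lt] UNIVk by blast
    qed
    then obtain i where i: "i \<notin> dom s" by blast
    let ?t = "s(i \<mapsto> \<xi>)"
    have "dom ?t = insert i (dom s)" by simp
    then have "|dom ?t| <o k" using insert_lt[OF sl Ck k(2)] by simp
    then have "?t \<in> Sbox k" unfolding Sbox_def by simp
    moreover have "s \<subseteq>\<^sub>m ?t" using i unfolding map_le_def by auto
    moreover have "[i \<mapsto> \<xi>] \<in> W \<xi>" unfolding W_def by blast
    moreover have "[i \<mapsto> \<xi>] \<subseteq>\<^sub>m ?t" unfolding map_le_def by simp
    ultimately show "\<exists>t\<in>Sbox k. s \<subseteq>\<^sub>m t \<and> (\<exists>w\<in>W \<xi>. w \<subseteq>\<^sub>m t)" by blast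
  next
    fix f :: "'k \<Rightarrow> 'm"
    have "{\<xi>\<in>\<Xi>. \<exists>w\<in>W \<xi>. f \<in> cyl w} \<subseteq> range f"
    proof
      fix \<xi> assume "\<xi> \<in> {\<xi>\<in>\<Xi>. \<exists>w\<in>W \<xi>. f \<in> cyl w}"
      then obtain i where "f \<in> cyl [i \<mapsto> \<xi>]" unfolding W_def by blast
      then have "f i = \<xi>" unfolding cyl_iff by simp
      then show "\<xi> \<in> range f" by blast
    qed
    then have "|{\<xi>\<in>\<Xi>. \<exists>w\<in>W \<xi>. f \<in> cyl w}| \<le>o |UNIV :: 'k set|"
      by (rule ordLeq_transitive[OF card_of_mono1 card_of_image])
    then show "|{\<xi>\<in>\<Xi>. \<exists>w\<in>W \<xi>. f \<in> cyl w}| \<le>o k"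
      by (rule ordLeq_ordIso_trans[OF _ UNIVk])
  qed
  then show ?thesis by (simp only: box_top_eq)
qed

lemma space_C: "add_cov_is k (box_top k :: ('m \<Rightarrow> 'm) topology) (cardSuc k)"
proof -
  interpret cylsp "Sbox k :: ('m \<rightharpoonup> 'm) set" by (rule box_cylsp[OF Ck k(2)])
  obtain \<Xi> :: "'m set" where Xi: "|\<Xi>| =o cardSuc k" using Xi_ex by blast
  obtain S0 :: "'m set" where S0: "cofinal S0 m" "|S0| =o k" using S0_ex by blast
  define W :: "'m \<Rightarrow> ('m \<rightharpoonup> 'm) set" where "W \<xi> = {[i \<mapsto> \<xi>] | i. i \<in> S0}" for \<xi>
  have "add_cov_is k XX (cardSuc k)"
  proof (rule add_cov_gen[OF k(1,2) _ Xi])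
    fix C :: "('m \<rightharpoonup> 'm) set"
    assume "C \<subseteq> Sbox k" "\<forall>c\<in>C. \<forall>d\<in>C. c \<subseteq>\<^sub>m d \<or> d \<subseteq>\<^sub>m c" "|C| <o k"
    then show "\<exists>u\<in>Sbox k. \<forall>c\<in>C. c \<subseteq>\<^sub>m u" by (rule box_ub_regular[OF Ck k(2,3)])
  next
    fix \<xi> :: 'm and s :: "'m \<rightharpoonup> 'm" assume s: "s \<in> Sbox k"
    then have sl: "|dom s| <o k" unfolding Sbox_def by simp
    have "\<not> S0 \<subseteq> dom s"
    proof
      assume "S0 \<subseteq> dom s"
      then have lt: "|S0| <o k" by (rule ordLeq_ordLess_trans[OF card_of_mono1 sl])
      show False using not_ordLess_ordIso[OF lt] S0(2) by blast
    qed
    then obtain i where i: "i \<in> S0" "i \<notin> dom s" by blast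
    let ?t = "s(i \<mapsto> \<xi>)"
    have "dom ?t = insert i (dom s)" by simp
    then have "|dom ?t| <o k" using insert_lt[OF sl Ck k(2)] by simp
    then have "?t \<in> Sbox k" unfolding Sbox_def by simp
    moreover have "s \<subseteq>\<^sub>m ?t" using i unfolding map_le_def by auto
    moreover have "[i \<mapsto> \<xi>] \<in> W \<xi>" unfolding W_def using i by blast
    moreover have "[i \<mapsto> \<xi>] \<subseteq>\<^sub>m ?t" unfolding map_le_def by simp
    ultimately show "\<exists>t\<in>Sbox k. s \<subseteq>\<^sub>m t \<and> (\<exists>w\<in>W \<xi>. w \<subseteq>\<^sub>m t)" by blast
  next
    fix f :: "'m \<Rightarrow> 'm"
    have "{\<xi>\<in>\<Xi>. \<exists>w\<in>W \<xi>. f \<in> cyl w} \<subseteq> f ` S0"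
    proof
      fix \<xi> assume "\<xi> \<in> {\<xi>\<in>\<Xi>. \<exists>w\<in>W \<xi>. f \<in> cyl w}"
      then obtain i where i: "i \<in> S0" "f \<in> cyl [i \<mapsto> \<xi>]" unfolding W_def by blast
      then have "f i = \<xi>" unfolding cyl_iff by simp
      then show "\<xi> \<in> f ` S0" using i(1) by blast
    qed
    then have "|{\<xi>\<in>\<Xi>. \<exists>w\<in>W \<xi>. f \<in> cyl w}| \<le>o |S0|"
      by (rule ordLeq_transitive[OF card_of_mono1 card_of_image])
    then show "|{\<xi>\<in>\<Xi>. \<exists>w\<in>W \<xi>. f \<in> cyl w}| \<le>o k"
      by (rule ordLeq_ordIso_trans[OF _ S0(2)])
  qed
  then show ?thesis by (simp only: box_top_eq)
qed

end

lemma few_gen: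
  assumes "\<forall>\<xi>\<in>Q. \<exists>j\<in>S0. P j \<xi>" "\<And>j \<xi> \<xi>'. j\<in>S0 \<Longrightarrow> P j \<xi> \<Longrightarrow> P j \<xi>' \<Longrightarrow> \<xi> = \<xi>'"
  shows "|Q| \<le>o |S0|"
proof -
  define g where "g j = (SOME \<xi>. P j \<xi>)" for j
  have "Q \<subseteq> g ` S0"
  proof
    fix \<xi> assume "\<xi> \<in> Q"
    then obtain j where j: "j \<in> S0" "P j \<xi>" using assms(1) by blast
    have "P j (g j)" unfolding g_def by (rule someI[of "P j", OF j(2)])
    then have "\<xi> = g j" using assms(2)[OF j(1) j(2)] by blast
    then show "\<xi> \<in> g ` S0" using j(1) by blast
  qed
  then show ?thesis by (rule ordLeq_transitive[OF card_of_mono1 card_of_image])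
qed

lemma cyl_dom_le: "f \<in> cyl s \<Longrightarrow> f \<in> cyl u \<Longrightarrow> dom s \<subseteq> dom u \<Longrightarrow> s \<subseteq>\<^sub>m u"
  unfolding map_le_def cyl_iff by fastforce

definition Sbd :: "'a rel \<Rightarrow> ('a \<rightharpoonup> 'b) set" where "Sbd r = {s. \<exists>a. dom s = underS r a}"

lemma bd_top_eq: fixes r :: "'a rel"
  shows "(bd_top r :: ('a \<Rightarrow> 'b) topology) = topology_generated_by (cyl ` (Sbd r :: ('a \<rightharpoonup> 'b) set))"
proof -
  have "{cyl s |(s :: 'a \<rightharpoonup> 'b) a. dom s = underS r a} = cyl ` Sbd r" unfolding Sbd_def by blast
  then show ?thesis unfolding bd_top_def by simp
qed

lemma bd_cylsp:
  fixes r :: "'a rel"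
  assumes r: "card_order r"
  shows "cylsp (Sbd r :: ('a \<rightharpoonup> 'b) set)"
proof
  fix f :: "'a \<Rightarrow> 'b"
  define s where "s x = (if x \<in> underS r undefined then Some (f x) else None)" for x
  have "dom s = underS r undefined" unfolding s_def dom_def by auto
  then have "s \<in> Sbd r" unfolding Sbd_def by blast
  moreover have "f \<in> cyl s" unfolding cyl_iff s_def by auto
  ultimately show "\<exists>s\<in>Sbd r. f \<in> cyl s" by blast
next
  fix s u :: "'a \<rightharpoonup> 'b" and f
  assume s: "s \<in> Sbd r" and u: "u \<in> Sbd r" and fs: "f \<in> cyl s" and fu: "f \<in> cyl u"
  obtain a b where a: "dom s = underS r a" and b: "dom u = underS r b" using s u unfolding Sbd_def by blast
  have "dom s \<subseteq> dom u \<or> dom u \<subseteq> dom s" unfolding a b using co_total[OF r, of a b] co_underS_mono[OF r] by blast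
  then show "\<exists>t\<in>Sbd r. s \<subseteq>\<^sub>m t \<and> u \<subseteq>\<^sub>m t \<and> f \<in> cyl t"
  proof
    assume "dom s \<subseteq> dom u"
    then have "s \<subseteq>\<^sub>m u" by (rule cyl_dom_le[OF fs fu])
    then show ?thesis using u fu map_le_refl by blast
  next
    assume "dom u \<subseteq> dom s"
    then have "u \<subseteq>\<^sub>m s" by (rule cyl_dom_le[OF fu fs])
    then show ?thesis using s fs map_le_refl by blast
  qed
qed

context sing begin

lemma bd_ub:
  fixes C :: "('m \<rightharpoonup> 'b) set"
  assumes C: "C \<subseteq> Sbd m" "\<forall>c\<in>C. \<forall>d\<in>C. c \<subseteq>\<^sub>m d \<or> d \<subseteq>\<^sub>m c" "|C| <o k"
  shows "\<exists>u\<in>Sbd m. \<forall>c\<in>C. c \<subseteq>\<^sub>m u"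
proof -
  define A where "A c = (SOME a. dom c = underS m a)" for c :: "'m \<rightharpoonup> 'b"
  have A: "dom c = underS m (A c)" if "c \<in> C" for c
  proof -
    have "\<exists>a. dom c = underS m a" using C(1) that unfolding Sbd_def by blast
    then show ?thesis unfolding A_def by (rule someI_ex)
  qed
  have "|A ` C| <o k" by (rule ordLeq_ordLess_trans[OF card_of_image C(3)])
  then obtain b where b: "\<forall>x\<in>A ` C. (x,b) \<in> m" using bounded by blast
  obtain u where u: "\<forall>c\<in>C. c \<subseteq>\<^sub>m u" "dom u = (\<Union>c\<in>C. dom c)" using chain_union[OF C(2)] by blast
  have du: "dom u \<subseteq> underS m b"
  proof
    fix x assume "x \<in> dom u"
    then obtain c where c: "c \<in> C" "x \<in> dom c" using u(2) by blast
    then have "x \<in> underS m (A c)" using A by blast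
    moreover have "underS m (A c) \<subseteq> underS m b" using co_underS_mono[OF m] b c(1) by blast
    ultimately show "x \<in> underS m b" by blast
  qed
  define t where "t x = (if x \<in> underS m b then (case u x of None \<Rightarrow> Some undefined | Some y \<Rightarrow> Some y) else None)" for x
  have "dom t = underS m b" unfolding t_def dom_def by (auto split: option.splits)
  then have "t \<in> Sbd m" unfolding Sbd_def by blast
  moreover have "u \<subseteq>\<^sub>m t" unfolding map_le_def t_def using du by (auto split: option.splits)
  ultimately show ?thesis using u(1) map_le_trans by blast
qed

lemma box_ub_sing:
  fixes C :: "('a \<rightharpoonup> 'b) set"
  assumes C: "C \<subseteq> Sbox m" "\<forall>c\<in>C. \<forall>d\<in>C. c \<subseteq>\<^sub>m d \<or> d \<subseteq>\<^sub>m c" "|C| <o k"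
  shows "\<exists>u\<in>Sbox m. \<forall>c\<in>C. c \<subseteq>\<^sub>m u"
proof -
  obtain u where u: "\<forall>c\<in>C. c \<subseteq>\<^sub>m u" "dom u = (\<Union>c\<in>C. dom c)" using chain_union[OF C(2)] by blast
  have "\<forall>c\<in>C. |dom c| <o m" using C(1) unfolding Sbox_def by blast
  then have "|\<Union>c\<in>C. dom c| <o m" by (rule sing_union[OF C(3)])
  then have "u \<in> Sbox m" unfolding Sbox_def using u(2) by simp
  then show ?thesis using u(1) by blast
qed

end

context sing begin

lemma space_B: "add_cov_is k (bd_top m :: ('m \<Rightarrow> 'm) topology) (cardSuc k)"
proof -
  interpret cylsp "Sbd m :: ('m \<rightharpoonup> 'm) set" by (rule bd_cylsp[OF m])
  obtain \<Xi> :: "'m set" where Xi: "|\<Xi>| =o cardSuc k" using Xi_ex by blast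
  obtain S0 :: "'m set" where S0: "cofinal S0 m" "|S0| =o k" using S0_ex by blast
  define W :: "'m \<Rightarrow> ('m \<rightharpoonup> 'm) set" where "W \<xi> = {[i \<mapsto> \<xi>] | i. i \<in> S0}" for \<xi>
  have "add_cov_is k XX (cardSuc k)"
  proof (rule add_cov_gen[OF k(1,2) _ Xi])
    fix C :: "('m \<rightharpoonup> 'm) set"
    assume "C \<subseteq> Sbd m" "\<forall>c\<in>C. \<forall>d\<in>C. c \<subseteq>\<^sub>m d \<or> d \<subseteq>\<^sub>m c" "|C| <o k"
    then show "\<exists>u\<in>Sbd m. \<forall>c\<in>C. c \<subseteq>\<^sub>m u" by (rule bd_ub)
  next
    fix \<xi> :: 'm and s :: "'m \<rightharpoonup> 'm" assume s: "s \<in> Sbd m"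
    then obtain a where a: "dom s = underS m a" unfolding Sbd_def by blast
    obtain i where i: "i \<in> S0" "a \<noteq> i" "(a,i) \<in> m" using S0(1) Fm unfolding cofinal_def by blast
    obtain b where b: "b \<in> S0" "i \<noteq> b" "(i,b) \<in> m" using S0(1) Fm unfolding cofinal_def by blast
    have ab: "(a,b) \<in> m" by (rule co_trans[OF m i(3) b(3)])
    have sub: "dom s \<subseteq> underS m b" unfolding a by (rule co_underS_mono[OF m ab])
    have ib: "i \<in> underS m b" unfolding underS_def using b by blast
    have si: "s i = None"
    proof (rule ccontr)
      assume "s i \<noteq> None"
      then have "i \<in> underS m a" using a by blast
      then have "(i,a) \<in> m" unfolding underS_def by blast
      then show False using co_antisym[OF m i(3)] i(2) by blast
    qed
    define t where "t x = (if x \<in> underS m b then Some (case s x of None \<Rightarrow> \<xi> | Some y \<Rightarrow> y) else None)" for x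
    have "dom t = underS m b" unfolding t_def dom_def by auto
    then have "t \<in> Sbd m" unfolding Sbd_def by blast
    moreover have "s \<subseteq>\<^sub>m t" unfolding map_le_def t_def using sub by (auto split: option.splits)
    moreover have "[i \<mapsto> \<xi>] \<in> W \<xi>" unfolding W_def using i by blast
    moreover have "[i \<mapsto> \<xi>] \<subseteq>\<^sub>m t" unfolding map_le_def t_def using ib si by simp
    ultimately show "\<exists>t\<in>Sbd m. s \<subseteq>\<^sub>m t \<and> (\<exists>w\<in>W \<xi>. w \<subseteq>\<^sub>m t)" by blast
  next
    fix f :: "'m \<Rightarrow> 'm"
    have "{\<xi>\<in>\<Xi>. \<exists>w\<in>W \<xi>. f \<in> cyl w} \<subseteq> f ` S0"
    proof
      fix \<xi> assume "\<xi> \<in> {\<xi>\<in>\<Xi>. \<exists>w\<in>W \<xi>. f \<in> cyl w}"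
      then obtain i where i: "i \<in> S0" "f \<in> cyl [i \<mapsto> \<xi>]" unfolding W_def by blast
      then have "f i = \<xi>" unfolding cyl_iff by simp
      then show "\<xi> \<in> f ` S0" using i(1) by blast
    qed
    then have "|{\<xi>\<in>\<Xi>. \<exists>w\<in>W \<xi>. f \<in> cyl w}| \<le>o |S0|"
      by (rule ordLeq_transitive[OF card_of_mono1 card_of_image])
    then show "|{\<xi>\<in>\<Xi>. \<exists>w\<in>W \<xi>. f \<in> cyl w}| \<le>o k"
      by (rule ordLeq_ordIso_trans[OF _ S0(2)])
  qed
  then show ?thesis by (simp only: bd_top_eq)
qed

lemma space_D: "add_cov_is k (box_top m :: ('m \<Rightarrow> 'm) topology) (cardSuc k)"
proof -
  interpret cylsp "Sbox m :: ('m \<rightharpoonup> 'm) set" by (rule box_cylsp[OF Cm m_inf])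
  obtain \<Xi> :: "'m set" where Xi: "|\<Xi>| =o cardSuc k" using Xi_ex by blast
  obtain S0 :: "'m set" where S0: "cofinal S0 m" "|S0| =o k" using S0_ex by blast
  obtain T :: "'m \<Rightarrow> 'm set set" where T1: "\<forall>j. \<forall>Y\<in>T j. Y \<noteq> {} \<and> |Y| <o m"
     and T2: "\<forall>j. \<forall>Y\<in>T j. \<forall>Y'\<in>T j. Y \<inter> Y' \<noteq> {}"
     and T3: "\<forall>D :: 'm set. |D| <o m \<longrightarrow> (\<exists>j\<in>S0. \<exists>Y\<in>T j. Y \<inter> D = {})"
    using tails[OF S0] by blast
  define ind :: "'m set \<Rightarrow> 'm \<Rightarrow> ('m \<rightharpoonup> 'm)" where "ind Y \<xi> x = (if x \<in> Y then Some \<xi> else None)" for Y \<xi> x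
  define W :: "'m \<Rightarrow> ('m \<rightharpoonup> 'm) set" where "W \<xi> = {ind Y \<xi> | Y j. j \<in> S0 \<and> Y \<in> T j}" for \<xi>
  have "add_cov_is k XX (cardSuc k)"
  proof (rule add_cov_gen[OF k(1,2) _ Xi])
    fix C :: "('m \<rightharpoonup> 'm) set"
    assume "C \<subseteq> Sbox m" "\<forall>c\<in>C. \<forall>d\<in>C. c \<subseteq>\<^sub>m d \<or> d \<subseteq>\<^sub>m c" "|C| <o k"
    then show "\<exists>u\<in>Sbox m. \<forall>c\<in>C. c \<subseteq>\<^sub>m u" by (rule box_ub_sing)
  next
    fix \<xi> :: 'm and s :: "'m \<rightharpoonup> 'm" assume s: "s \<in> Sbox m"
    then have sl: "|dom s| <o m" unfolding Sbox_def by simp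
    obtain j Y where jY: "j \<in> S0" "Y \<in> T j" "Y \<inter> dom s = {}" using T3 sl by blast
    have Yl: "|Y| <o m" using T1 jY(2) by blast
    let ?w = "ind Y \<xi>"
    have dw: "dom ?w = Y" unfolding ind_def dom_def by auto
    let ?t = "?w ++ s"
    have "dom ?t = dom s \<union> Y" using dw by auto
    then have "|dom ?t| <o m" using Un_lt[OF sl Yl Cm m_inf] by simp
    then have "?t \<in> Sbox m" unfolding Sbox_def by simp
    moreover have "s \<subseteq>\<^sub>m ?t" by (rule map_le_map_add)
    moreover have "?w \<in> W \<xi>" unfolding W_def using jY by blast
    moreover have "?w \<subseteq>\<^sub>m ?t" unfolding map_le_def using jY(3) dw
      by (auto simp: map_add_def ind_def split: option.splits)
    ultimately show "\<exists>t\<in>Sbox m. s \<subseteq>\<^sub>m t \<and> (\<exists>w\<in>W \<xi>. w \<subseteq>\<^sub>m t)" by blast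
  next
    fix f :: "'m \<Rightarrow> 'm"
    let ?Q = "{\<xi>\<in>\<Xi>. \<exists>w\<in>W \<xi>. f \<in> cyl w}"
    let ?P = "\<lambda>j \<xi>. \<exists>Y\<in>T j. \<forall>x\<in>Y. f x = \<xi>"
    have "|?Q| \<le>o |S0|"
    proof (rule few_gen[where P = ?P])
      show "\<forall>\<xi>\<in>?Q. \<exists>j\<in>S0. ?P j \<xi>"
      proof
        fix \<xi> assume "\<xi> \<in> ?Q"
        then obtain Y j where Yj: "j \<in> S0" "Y \<in> T j" "f \<in> cyl (ind Y \<xi>)" unfolding W_def by blast
        then have "\<forall>x\<in>Y. f x = \<xi>" unfolding cyl_iff ind_def by auto
        then show "\<exists>j\<in>S0. ?P j \<xi>" using Yj by blast
      qed
    next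
      fix j \<xi> \<xi>' assume "j \<in> S0" "?P j \<xi>" "?P j \<xi>'"
      then obtain Y Y' where "Y \<in> T j" "Y' \<in> T j" "\<forall>x\<in>Y. f x = \<xi>" "\<forall>x\<in>Y'. f x = \<xi>'" by blast
      moreover then obtain x where "x \<in> Y" "x \<in> Y'" using T2 by blast
      ultimately show "\<xi> = \<xi>'" by metis
    qed
    then show "|?Q| \<le>o k" by (rule ordLeq_ordIso_trans[OF _ S0(2)])
  qed
  then show ?thesis by (simp only: box_top_eq)
qed

end

context sing begin

lemma space_E: "add_cov_is k (box_top m :: ('m \<Rightarrow> bool) topology) (cardSuc k)"
proof -
  interpret cylsp "Sbox m :: ('m \<rightharpoonup> bool) set" by (rule box_cylsp[OF Cm m_inf])
  obtain \<Xi> :: "'m set" where Xi: "|\<Xi>| =o cardSuc k" using Xi_ex by blast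
  have Xil: "|\<Xi>| <o m" by (rule Xi_lt[OF Xi])
  obtain S0 :: "'m set" where S0: "cofinal S0 m" "|S0| =o k" using S0_ex by blast
  obtain T :: "'m \<Rightarrow> 'm set set" where T1: "\<forall>j. \<forall>Y\<in>T j. Y \<noteq> {} \<and> |Y| <o m"
     and T2: "\<forall>j. \<forall>Y\<in>T j. \<forall>Y'\<in>T j. Y \<inter> Y' \<noteq> {}"
     and T3: "\<forall>D :: 'm set. |D| <o m \<longrightarrow> (\<exists>j\<in>S0. \<exists>Y\<in>T j. Y \<inter> D = {})"
    using tails[OF S0] by blast
  have "|UNIV \<times> UNIV :: ('m \<times> 'm) set| =o |UNIV :: 'm set|" by (rule card_of_Times_same_infinite[OF infm])
  then have "|UNIV :: ('m \<times> 'm) set| \<le>o |UNIV :: 'm set|" by (simp add: ordIso_imp_ordLeq)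
  then have "\<exists>\<pi> :: 'm \<times> 'm \<Rightarrow> 'm. inj_on \<pi> UNIV \<and> \<pi> ` UNIV \<subseteq> UNIV" by (rule iffD2[OF card_of_ordLeq])
  then obtain \<pi> :: "'m \<times> 'm \<Rightarrow> 'm" where pi: "inj \<pi>" by blast
  define wE :: "'m set \<Rightarrow> 'm \<Rightarrow> ('m \<rightharpoonup> bool)" where
    "wE Y \<xi> z = (if z \<in> \<pi> ` (Y \<times> \<Xi>) then Some (snd (inv \<pi> z) = \<xi>) else None)" for Y \<xi> z
  have wE_val: "wE Y \<xi> (\<pi> (x, y)) = Some (y = \<xi>)" if "x \<in> Y" "y \<in> \<Xi>" for Y \<xi> x y
    using that unfolding wE_def by (simp add: inv_f_f[OF pi])
  define W :: "'m \<Rightarrow> ('m \<rightharpoonup> bool) set" where "W \<xi> = {wE Y \<xi> | Y j. j \<in> S0 \<and> Y \<in> T j}" for \<xi>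
  have "add_cov_is k XX (cardSuc k)"
  proof (rule add_cov_gen[OF k(1,2) _ Xi])
    fix C :: "('m \<rightharpoonup> bool) set"
    assume "C \<subseteq> Sbox m" "\<forall>c\<in>C. \<forall>d\<in>C. c \<subseteq>\<^sub>m d \<or> d \<subseteq>\<^sub>m c" "|C| <o k"
    then show "\<exists>u\<in>Sbox m. \<forall>c\<in>C. c \<subseteq>\<^sub>m u" by (rule box_ub_sing)
  next
    fix \<xi> :: 'm and s :: "'m \<rightharpoonup> bool" assume s: "s \<in> Sbox m"
    then have sl: "|dom s| <o m" unfolding Sbox_def by simp
    define D where "D = fst ` (\<pi> -` dom s)"
    have "inj_on \<pi> (\<pi> -` dom s)" using pi by (rule inj_on_subset) simp
    moreover have "\<pi> ` (\<pi> -` dom s) \<subseteq> dom s" by blast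
    ultimately have "\<exists>g. inj_on g (\<pi> -` dom s) \<and> g ` (\<pi> -` dom s) \<subseteq> dom s" by blast
    then have "|\<pi> -` dom s| \<le>o |dom s|" by (rule iffD1[OF card_of_ordLeq])
    then have "|D| \<le>o |dom s|" unfolding D_def by (rule ordLeq_transitive[OF card_of_image])
    then have Dl: "|D| <o m" by (rule ordLeq_ordLess_trans[OF _ sl])
    obtain j Y where jY: "j \<in> S0" "Y \<in> T j" "Y \<inter> D = {}" using T3 Dl by blast
    have Yl: "|Y| <o m" using T1 jY(2) by blast
    let ?w = "wE Y \<xi>"
    have dw: "dom ?w = \<pi> ` (Y \<times> \<Xi>)" unfolding wE_def dom_def by auto
    have disj: "dom ?w \<inter> dom s = {}"
    proof (rule ccontr)
      assume "dom ?w \<inter> dom s \<noteq> {}"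
      then obtain z where z: "z \<in> \<pi> ` (Y \<times> \<Xi>)" "z \<in> dom s" unfolding dw by blast
      then obtain x y where xy: "x \<in> Y" "\<pi> (x,y) \<in> dom s" by blast
      then have "x \<in> D" unfolding D_def by force
      then show False using jY(3) xy(1) by blast
    qed
    have "|dom ?w| \<le>o |Y \<times> \<Xi>|" unfolding dw by (rule card_of_image)
    then have dwl: "|dom ?w| <o m" by (rule ordLeq_ordLess_trans[OF _ times_lt[OF Yl Xil]])
    let ?t = "?w ++ s"
    have "dom ?t = dom s \<union> dom ?w" by auto
    then have "|dom ?t| <o m" using Un_lt[OF sl dwl Cm m_inf] by simp
    then have "?t \<in> Sbox m" unfolding Sbox_def by simp
    moreover have "s \<subseteq>\<^sub>m ?t" by (rule map_le_map_add)
    moreover have "?w \<in> W \<xi>" unfolding W_def using jY by blast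
    moreover have "?w \<subseteq>\<^sub>m ?t" unfolding map_le_def using disj
      by (auto simp: map_add_def split: option.splits)
    ultimately show "\<exists>t\<in>Sbox m. s \<subseteq>\<^sub>m t \<and> (\<exists>w\<in>W \<xi>. w \<subseteq>\<^sub>m t)" by blast
  next
    fix f :: "'m \<Rightarrow> bool"
    let ?Q = "{\<xi>\<in>\<Xi>. \<exists>w\<in>W \<xi>. f \<in> cyl w}"
    let ?P = "\<lambda>j \<xi>. \<xi> \<in> \<Xi> \<and> (\<exists>Y\<in>T j. f \<in> cyl (wE Y \<xi>))"
    have "|?Q| \<le>o |S0|"
    proof (rule few_gen[where P = ?P])
      show "\<forall>\<xi>\<in>?Q. \<exists>j\<in>S0. ?P j \<xi>" unfolding W_def by blast
    next
      fix j \<xi> \<xi>' assume "j \<in> S0" "?P j \<xi>" "?P j \<xi>'"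
      then obtain Y Y' where YY: "\<xi> \<in> \<Xi>" "\<xi>' \<in> \<Xi>" "Y \<in> T j" "Y' \<in> T j" "f \<in> cyl (wE Y \<xi>)" "f \<in> cyl (wE Y' \<xi>')"
        by blast
      obtain x where x: "x \<in> Y" "x \<in> Y'" using T2 YY(3,4) by blast
      have "f (\<pi> (x, \<xi>)) = True" using YY(5) wE_val[OF x(1) YY(1), of \<xi>] unfolding cyl_iff by simp
      moreover have "f (\<pi> (x, \<xi>)) = (\<xi> = \<xi>')" using YY(6) wE_val[OF x(2) YY(1), of \<xi>'] unfolding cyl_iff by simp
      ultimately show "\<xi> = \<xi>'" by simp
    qed
    then show "|?Q| \<le>o k" by (rule ordLeq_ordIso_trans[OF _ S0(2)])
  qed
  then show ?thesis by (simp only: box_top_eq)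
qed

end

theorem mainTheorem8:
  fixes k :: "'k rel" and m :: "'m rel"
  assumes "card_order k" and "cinfinite k" and "regularCard k"
    and "card_order m" and "cof_is m k" and "(k, m) \<in> ordLess"
  shows "add_cov_is k (box_top k :: ('k \<Rightarrow> 'm) topology) (cardSuc k)
       \<and> add_cov_is k (bd_top m :: ('m \<Rightarrow> 'm) topology) (cardSuc k)
       \<and> add_cov_is k (box_top k :: ('m \<Rightarrow> 'm) topology) (cardSuc k)
       \<and> add_cov_is k (box_top m :: ('m \<Rightarrow> bool) topology) (cardSuc k)
       \<and> add_cov_is k (box_top m :: ('m \<Rightarrow> 'm) topology) (cardSuc k)"
proof -
  interpret sing k m
    using assms by (unfold_locales) auto
  show ?thesis using space_A space_B space_C space_D space_E by blast
qed

end
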